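(* If $T\in\mathcal{T}$, then $C_T=\emptyset$, $A_T$ is an independent set, every vertex of $A_T$ has degree exactly $3$ in $T$, and $\nu(T)=|A_T|$. In particular $T$ is bipartite with partite sets $A_T$ and $D_T$.
   Context: Gallai–Edmonds sets: for a graph $G$, $D_G$ is the set of vertices not covered by at least one maximum matching, $A_G=N_G(D_G)\setminus D_G$, $C_G=V(G)\setminus(A_G\cup D_G)$. $\nu$ denotes the matching number, $n(T)$ the number of vertices. $\mathcal{T}$ is the set of all trees $T$ such that every vertex of $A_T$ has degree at most $3$ in $T$ and $\nu(T)=\frac{n(T)-1}{3}$. *)

theory Defs
  imports Main
begin

definition graph :: "'a set \<Rightarrow> 'a set set \<Rightarrow> bool" where
  "graph V E \<longleftrightarrow> finite V \<and>
     (\<forall>e\<in>E. \<exists>u v. e = {u, v} \<and> u \<noteq> v \<and> u \<in> V \<and> v \<in> V)"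

definition adj :: "'a set set \<Rightarrow> 'a \<Rightarrow> 'a \<Rightarrow> bool" where
  "adj E u v \<longleftrightarrow> {u, v} \<in> E"

definition connected :: "'a set \<Rightarrow> 'a set set \<Rightarrow> bool" where
  "connected V E \<longleftrightarrow> V \<noteq> {} \<and> (\<forall>u\<in>V. \<forall>v\<in>V. (adj E)\<^sup>*\<^sup>* u v)"

definition is_cycle :: "'a set set \<Rightarrow> 'a list \<Rightarrow> bool" where
  "is_cycle E vs \<longleftrightarrow> length vs \<ge> 3 \<and> distinct vs \<and>
     (\<forall>i. Suc i < length vs \<longrightarrow> adj E (vs ! i) (vs ! Suc i)) \<and>
     adj E (last vs) (hd vs)"

definition acyclic_graph :: "'a set set \<Rightarrow> bool" where
  "acyclic_graph E \<longleftrightarrow> \<not> (\<exists>vs. is_cycle E vs)"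

definition tree :: "'a set \<Rightarrow> 'a set set \<Rightarrow> bool" where
  "tree V E \<longleftrightarrow> graph V E \<and> connected V E \<and> acyclic_graph E"

definition degree :: "'a set set \<Rightarrow> 'a \<Rightarrow> nat" where
  "degree E v = card {e\<in>E. v \<in> e}"

definition matching :: "'a set set \<Rightarrow> 'a set set \<Rightarrow> bool" where
  "matching E M \<longleftrightarrow> M \<subseteq> E \<and> (\<forall>e1\<in>M. \<forall>e2\<in>M. e1 \<noteq> e2 \<longrightarrow> e1 \<inter> e2 = {})"

definition matching_number :: "'a set set \<Rightarrow> nat" where
  "matching_number E = Max (card ` {M. matching E M})"

definition maximum_matching :: "'a set set \<Rightarrow> 'a set set \<Rightarrow> bool" where
  "maximum_matching E M \<longleftrightarrow> matching E M \<and> card M = matching_number E"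

definition neighbourhood :: "'a set \<Rightarrow> 'a set set \<Rightarrow> 'a set \<Rightarrow> 'a set" where
  "neighbourhood V E S = {u\<in>V. \<exists>v\<in>S. adj E u v}"

definition GE_D :: "'a set \<Rightarrow> 'a set set \<Rightarrow> 'a set" where
  "GE_D V E = {v\<in>V. \<exists>M. maximum_matching E M \<and> v \<notin> \<Union>M}"

definition GE_A :: "'a set \<Rightarrow> 'a set set \<Rightarrow> 'a set" where
  "GE_A V E = neighbourhood V E (GE_D V E) - GE_D V E"

definition GE_C :: "'a set \<Rightarrow> 'a set set \<Rightarrow> 'a set" where
  "GE_C V E = V - (GE_A V E \<union> GE_D V E)"

definition independent :: "'a set \<Rightarrow> 'a set set \<Rightarrow> 'a set \<Rightarrow> bool" where
  "independent V E S \<longleftrightarrow> S \<subseteq> V \<and> (\<forall>u\<in>S. \<forall>v\<in>S. \<not> adj E u v)"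

text \<open>The class \<open>\<T>\<close>: trees whose A-vertices have degree at most 3 and with
  \<open>\<nu>(T) = (n(T) - 1)/3\<close>, i.e. \<open>3 \<nu>(T) + 1 = n(T)\<close>.\<close>
definition class_T :: "'a set \<Rightarrow> 'a set set \<Rightarrow> bool" where
  "class_T V E \<longleftrightarrow> tree V E \<and> (\<forall>v\<in>GE_A V E. degree E v \<le> 3) \<and>
     3 * matching_number E + 1 = card V"

definition bipartite_with :: "'a set \<Rightarrow> 'a set set \<Rightarrow> 'a set \<Rightarrow> 'a set \<Rightarrow> bool" where
  "bipartite_with V E X Y \<longleftrightarrow> X \<union> Y = V \<and> X \<inter> Y = {} \<and>
     (\<forall>e\<in>E. \<exists>x\<in>X. \<exists>y\<in>Y. e = {x, y})"

end

theory Submission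
  imports Defs
begin

lemma graph_finE: "graph V E \<Longrightarrow> finite E"
proof -
  assume g: "graph V E"
  have "E \<subseteq> Pow V"
  proof
    fix e assume "e \<in> E"
    then obtain u v where "e = {u,v}" "u \<in> V" "v \<in> V" using g unfolding graph_def by blast
    thus "e \<in> Pow V" by blast
  qed
  moreover have "finite V" using g unfolding graph_def by blast
  ultimately show ?thesis by (metis finite_Pow_iff finite_subset)
qed

lemma graph_edge: "graph V E \<Longrightarrow> e \<in> E \<Longrightarrow> \<exists>u v. e = {u,v} \<and> u \<noteq> v \<and> u \<in> V \<and> v \<in> V"
  unfolding graph_def by blast

lemma edge_other: assumes "graph V E" "e \<in> E" "x \<in> e"
  shows "\<exists>y. e = {x,y} \<and> x \<noteq> y \<and> x \<in> V \<and> y \<in> V"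
proof -
  obtain u v where uv: "e = {u,v}" "u \<noteq> v" "u \<in> V" "v \<in> V" using graph_edge[OF assms(1,2)] by blast
  show ?thesis
  proof (cases "x = u")
    case True thus ?thesis using uv by blast
  next
    case False
    hence "x = v" using uv assms(3) by blast
    thus ?thesis using uv by (metis insert_commute)
  qed
qed

lemma adj_sym: "adj E u v = adj E v u" unfolding adj_def by (simp add: insert_commute)

lemma adj_ne: "graph V E \<Longrightarrow> adj E u v \<Longrightarrow> u \<noteq> v \<and> u \<in> V \<and> v \<in> V"
proof -
  assume g: "graph V E" and a: "adj E u v"
  then obtain p q where "{u,v} = {p,q}" "p \<noteq> q" "p \<in> V" "q \<in> V"
    using graph_edge[OF g, of "{u,v}"] unfolding adj_def by blast
  thus ?thesis by (auto simp: doubleton_eq_iff)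
qed

lemma matching_disj: "matching E M \<Longrightarrow> e1 \<in> M \<Longrightarrow> e2 \<in> M \<Longrightarrow> e1 \<noteq> e2 \<Longrightarrow> e1 \<inter> e2 = {}"
  unfolding matching_def by auto

lemma matching_sub: "matching E M \<Longrightarrow> M \<subseteq> E"
  unfolding matching_def by auto

lemma matching_fin: "graph V E \<Longrightarrow> matching E M \<Longrightarrow> finite M"
  using graph_finE matching_def finite_subset by metis

lemma fin_matchings: "graph V E \<Longrightarrow> finite {M. matching E M}"
proof -
  assume g: "graph V E"
  have "{M. matching E M} \<subseteq> Pow E" unfolding matching_def by auto
  thus ?thesis using graph_finE[OF g] finite_subset by blast
qed

lemma card_le_nu: "graph V E \<Longrightarrow> matching E M \<Longrightarrow> card M \<le> matching_number E"
  unfolding matching_number_def by (rule Max_ge) (auto intro: finite_imageI fin_matchings)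

lemma ex_max: assumes g: "graph V E" shows "\<exists>M. maximum_matching E M"
proof -
  have "matching E {}" unfolding matching_def by auto
  hence ne: "card ` {M. matching E M} \<noteq> {}" by blast
  have "Max (card ` {M. matching E M}) \<in> card ` {M. matching E M}"
    using Max_in[OF finite_imageI[OF fin_matchings[OF g]] ne] .
  thus ?thesis unfolding maximum_matching_def matching_number_def by auto
qed

lemma no_aug: assumes g: "graph V E" and M: "maximum_matching E M" and e: "{u,v} \<in> E"
  and u: "u \<notin> \<Union>M" and v: "v \<notin> \<Union>M"
  shows False
proof -
  have m: "matching E M" using M maximum_matching_def by blast
  have fin: "finite M" using matching_fin[OF g m] .
  have nin: "{u,v} \<notin> M" using u by blast
  have "matching E (insert {u,v} M)"
    using m e u v unfolding matching_def by blast
  hence "card (insert {u,v} M) \<le> matching_number E" using card_le_nu[OF g] by blast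
  moreover have "card (insert {u,v} M) = Suc (card M)" using fin nin by simp
  ultimately show False using M unfolding maximum_matching_def by simp
qed

lemma swap:
  assumes g: "graph V E" and m: "matching E N" and yz: "{y,z} \<in> N" and x: "x \<notin> \<Union>N"
    and xy: "{x,y} \<in> E" and zx: "z \<noteq> x"
  shows "matching E (insert {x,y} (N - {{y,z}}))" "card (insert {x,y} (N - {{y,z}})) = card N"
        "z \<notin> \<Union>(insert {x,y} (N - {{y,z}}))"
proof -
  have fin: "finite N" using matching_fin[OF g m] .
  have yzE: "{y,z} \<in> E" using m yz unfolding matching_def by blast
  have ynz: "y \<noteq> z" using adj_ne[OF g, of y z] yzE adj_def by metis
  have xny: "x \<noteq> y" using adj_ne[OF g, of x y] xy adj_def by metis
  have oth: "\<And>e. e \<in> N - {{y,z}} \<Longrightarrow> x \<notin> e \<and> y \<notin> e \<and> z \<notin> e"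
  proof -
    fix e assume e: "e \<in> N - {{y,z}}"
    have "e \<noteq> {y,z}" "e \<in> N" using e by auto
    hence "e \<inter> {y,z} = {}" using matching_disj[OF m _ yz] by blast
    moreover have "x \<notin> e" using x \<open>e \<in> N\<close> by blast
    ultimately show "x \<notin> e \<and> y \<notin> e \<and> z \<notin> e" by blast
  qed
  show "matching E (insert {x,y} (N - {{y,z}}))"
    unfolding matching_def
  proof (intro conjI ballI impI)
    show "insert {x, y} (N - {{y, z}}) \<subseteq> E" using matching_sub[OF m] xy by blast
  next
    fix e1 e2 assume e1: "e1 \<in> insert {x, y} (N - {{y, z}})" and e2: "e2 \<in> insert {x, y} (N - {{y, z}})"
      and ne: "e1 \<noteq> e2"
    show "e1 \<inter> e2 = {}"
    proof (cases "e1 = {x,y}")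
      case True
      then have "e2 \<in> N - {{y,z}}" using e2 ne by auto
      then show ?thesis using oth True by blast
    next
      case False
      then have e1N: "e1 \<in> N - {{y,z}}" using e1 by auto
      show ?thesis
      proof (cases "e2 = {x,y}")
        case True then show ?thesis using oth e1N by blast
      next
        case False
        then have "e2 \<in> N" using e2 by auto
        then show ?thesis using matching_disj[OF m] e1N ne by blast
      qed
    qed
  qed
  have "{x,y} \<notin> N - {{y,z}}" using x by blast
  hence "card (insert {x,y} (N - {{y,z}})) = Suc (card (N - {{y,z}}))" using fin by simp
  also have "\<dots> = card N" using fin yz
    by (metis card_Diff1_less card_Diff_singleton_if Suc_diff_1 gr0I not_less0)
  finally show "card (insert {x,y} (N - {{y,z}})) = card N" .
  show "z \<notin> \<Union>(insert {x,y} (N - {{y,z}}))" using oth zx ynz by blast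
qed

definition st :: "'a set set \<Rightarrow> 'a set set \<Rightarrow> 'a \<Rightarrow> 'a \<Rightarrow> bool" where
  "st E M x z \<longleftrightarrow> (\<exists>y. {x,y} \<in> E \<and> {y,z} \<in> M)"

definition evn :: "'a set \<Rightarrow> 'a set set \<Rightarrow> 'a set set \<Rightarrow> nat \<Rightarrow> 'a \<Rightarrow> bool" where
  "evn V E M n z \<longleftrightarrow> (\<exists>r\<in>V. r \<notin> \<Union>M \<and> (st E M ^^ n) r z)"

definition even_reach :: "'a set \<Rightarrow> 'a set set \<Rightarrow> 'a set set \<Rightarrow> 'a \<Rightarrow> bool" where
  "even_reach V E M z \<longleftrightarrow> (\<exists>r\<in>V. r \<notin> \<Union>M \<and> (st E M)\<^sup>*\<^sup>* r z)"

lemma D_even: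
  assumes g: "graph V E" and M: "maximum_matching E M"
  shows "maximum_matching E M' \<Longrightarrow> d \<in> V \<Longrightarrow> d \<notin> \<Union>M' \<Longrightarrow> even_reach V E M d"
proof (induction "card (M' - M)" arbitrary: M' d rule: less_induct)
  case less
  have mM: "matching E M" using M maximum_matching_def by blast
  have mM': "matching E M'" using less.prems maximum_matching_def by blast
  show ?case
  proof (cases "d \<in> \<Union>M")
    case False thus ?thesis using less.prems unfolding even_reach_def by blast
  next
    case True
    then obtain e where e: "e \<in> M" "d \<in> e" by blast
    then obtain y where ey: "e = {d,y}" "d \<noteq> y" "y \<in> V"
      using edge_other[OF g _ e(2)] matching_sub[OF mM] by blast
    have dyE: "{d,y} \<in> E" using e ey matching_sub[OF mM] by blast
    have "y \<in> \<Union>M'"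
    proof (rule ccontr)
      assume "y \<notin> \<Union>M'"
      thus False using no_aug[OF g less.prems(1) dyE] less.prems(3) by blast
    qed
    then obtain e' where e': "e' \<in> M'" "y \<in> e'" by blast
    then obtain z where ez: "e' = {y,z}" "y \<noteq> z" "z \<in> V"
      using edge_other[OF g _ e'(2)] matching_sub[OF mM'] by blast
    have zd: "z \<noteq> d" using less.prems(3) e' ez by blast
    define M1 where "M1 = insert {d,y} (M' - {{y,z}})"
    have yzM': "{y,z} \<in> M'" using e' ez by simp
    have s: "matching E M1" "card M1 = card M'" "z \<notin> \<Union>M1"
      using swap[OF g mM' yzM' less.prems(3) dyE zd] unfolding M1_def by auto
    have maxM1: "maximum_matching E M1" using s less.prems(1) unfolding maximum_matching_def by simp
    have yzM: "{y,z} \<notin> M"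
    proof
      assume "{y,z} \<in> M"
      moreover have "{y,z} \<noteq> {d,y}" using zd ez(2) by (auto simp: doubleton_eq_iff)
      ultimately have "{y,z} \<inter> {d,y} = {}" using matching_disj[OF mM _ e(1)] ey by blast
      thus False by blast
    qed
    have "M1 - M = (M' - M) - {{y,z}}" unfolding M1_def using e ey by auto
    moreover have "finite M'" using matching_fin[OF g mM'] .
    ultimately have "card (M1 - M) < card (M' - M)"
      using yzM' yzM by (metis DiffI card_Diff1_less finite_Diff)
    then have "even_reach V E M z" by (rule less.hyps[OF _ maxM1 ez(3) s(3)])
    then obtain r where r: "r \<in> V" "r \<notin> \<Union>M" "(st E M)\<^sup>*\<^sup>* r z" unfolding even_reach_def by blast
    have "{z,y} \<in> E" using matching_sub[OF mM'] yzM' by (simp add: insert_commute subset_iff)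
    moreover have "{y,d} \<in> M" using e ey by (simp add: insert_commute)
    ultimately have "st E M z d" unfolding st_def by blast
    thus ?thesis using r unfolding even_reach_def by (meson rtranclp.rtrancl_into_rtrancl)
  qed
qed

lemma even_D_aux:
  assumes g: "graph V E" and M: "maximum_matching E M"
    and col: "\<And>u v. adj E u v \<Longrightarrow> col u \<noteq> (col v :: bool)"
  shows "evn V E M n z \<Longrightarrow> (\<forall>m<n. \<not> evn V E M m z) \<Longrightarrow>
     (\<exists>N. maximum_matching E N \<and> z \<notin> \<Union>N \<and>
        (\<forall>y' z''. {y',z''} \<in> M \<and> {y',z''} \<notin> N \<and> col y' \<noteq> col z \<longrightarrow> (\<exists>m<n. evn V E M m z'') \<or> z'' = z) \<and>
        (\<forall>e\<in>N. \<forall>t\<in>e. col t \<noteq> col z \<longrightarrow> t \<in> \<Union>M))"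
proof (induction n arbitrary: z rule: less_induct)
  case (less n)
  have mM: "matching E M" using M maximum_matching_def by blast
  show ?case
  proof (cases n)
    case 0
    then obtain r where "r \<in> V" "r \<notin> \<Union>M" "(st E M ^^ 0) r z" using less.prems(1) unfolding evn_def by blast
    hence "z \<notin> \<Union>M" by simp
    thus ?thesis using M by blast
  next
    case (Suc k)
    obtain r where r: "r \<in> V" "r \<notin> \<Union>M" "(st E M ^^ Suc k) r z" using less.prems(1) Suc unfolding evn_def by blast
    then obtain x where x: "(st E M ^^ k) r x" "st E M x z" by (meson relpowp_Suc_E)
    have evx: "evn V E M k x" using r x unfolding evn_def by blast
    define k' where "k' = (LEAST m. evn V E M m x)"
    have evx': "evn V E M k' x" unfolding k'_def by (rule LeastI[of _ k], rule evx)
    have k'k: "k' \<le> k" unfolding k'_def by (rule Least_le, rule evx)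
    have minx: "\<forall>m<k'. \<not> evn V E M m x" unfolding k'_def using not_less_Least by blast
    have k'n: "k' < n" using k'k Suc by simp
    obtain N where N: "maximum_matching E N" "x \<notin> \<Union>N"
      "\<forall>y' z''. {y',z''} \<in> M \<and> {y',z''} \<notin> N \<and> col y' \<noteq> col x \<longrightarrow> (\<exists>m<k'. evn V E M m z'') \<or> z'' = x"
      "\<forall>e\<in>N. \<forall>t\<in>e. col t \<noteq> col x \<longrightarrow> t \<in> \<Union>M"
      using less.IH[OF k'n evx' minx] by blast
    have mN: "matching E N" using N(1) maximum_matching_def by blast
    obtain y where y: "{x,y} \<in> E" "{y,z} \<in> M" using x(2) unfolding st_def by blast
    have yzE: "{y,z} \<in> E" using y(2) matching_sub[OF mM] by blast
    have cxy: "col x \<noteq> col y" using col[of x y] y(1) adj_def by metis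
    have cyz: "col y \<noteq> col z" using col[of y z] yzE adj_def by metis
    have cxz: "col z = col x" using cxy cyz by auto
    have zx: "z \<noteq> x"
    proof
      assume "z = x"
      hence "evn V E M k' z" using evx' by simp
      thus False using less.prems(2) k'n by blast
    qed
    have yzN: "{y,z} \<in> N"
    proof (rule ccontr)
      assume "{y,z} \<notin> N"
      hence "(\<exists>m<k'. evn V E M m z) \<or> z = x" using N(3) y(2) cxy by blast
      thus False
      proof
        assume "\<exists>m<k'. evn V E M m z"
        then obtain m where "m < k'" "evn V E M m z" by blast
        thus False using less.prems(2) k'n by auto
      qed (use zx in blast)
    qed
    define N' where "N' = insert {x,y} (N - {{y,z}})"
    have s: "matching E N'" "card N' = card N" "z \<notin> \<Union>N'"
      using swap[OF g mN yzN N(2) y(1) zx] unfolding N'_def by auto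
    have maxN': "maximum_matching E N'" using s N(1) unfolding maximum_matching_def by simp
    have inv1: "\<forall>y' z''. {y',z''} \<in> M \<and> {y',z''} \<notin> N' \<and> col y' \<noteq> col z \<longrightarrow> (\<exists>m<n. evn V E M m z'') \<or> z'' = z"
    proof (intro allI impI)
      fix y' z'' assume a: "{y',z''} \<in> M \<and> {y',z''} \<notin> N' \<and> col y' \<noteq> col z"
      show "(\<exists>m<n. evn V E M m z'') \<or> z'' = z"
      proof (cases "{y',z''} = {y,z}")
        case True
        hence "(y' = y \<and> z'' = z) \<or> (y' = z \<and> z'' = y)" by (simp add: doubleton_eq_iff)
        thus ?thesis using a by blast
      next
        case False
        hence "{y',z''} \<notin> N" using a unfolding N'_def by blast
        hence "(\<exists>m<k'. evn V E M m z'') \<or> z'' = x" using N(3) a cxz by auto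
        thus ?thesis using k'n evx' by (meson order.strict_trans)
      qed
    qed
    have inv2: "\<forall>e\<in>N'. \<forall>t\<in>e. col t \<noteq> col z \<longrightarrow> t \<in> \<Union>M"
    proof (intro ballI impI)
      fix e t assume e: "e \<in> N'" and t: "t \<in> e" and ct: "col t \<noteq> col z"
      show "t \<in> \<Union>M"
      proof (cases "e = {x,y}")
        case True
        hence "t = y" using t ct cxz by auto
        thus ?thesis using y(2) by blast
      next
        case False
        hence "e \<in> N" using e unfolding N'_def by blast
        thus ?thesis using N(4) t ct cxz by auto
      qed
    qed
    show ?thesis using maxN' s(3) inv1 inv2 by blast
  qed
qed

lemma even_D:
  assumes g: "graph V E" and M: "maximum_matching E M"
    and col: "\<And>u v. adj E u v \<Longrightarrow> col u \<noteq> (col v :: bool)"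
    and ev: "even_reach V E M z"
  shows "\<exists>N. maximum_matching E N \<and> z \<notin> \<Union>N \<and> (\<forall>e\<in>N. \<forall>t\<in>e. col t \<noteq> col z \<longrightarrow> t \<in> \<Union>M)"
proof -
  obtain r where r: "r \<in> V" "r \<notin> \<Union>M" "(st E M)\<^sup>*\<^sup>* r z" using ev unfolding even_reach_def by blast
  then obtain n where "(st E M ^^ n) r z" using rtranclp_power by metis
  hence ex: "evn V E M n z" using r unfolding evn_def by blast
  define n0 where "n0 = (LEAST m. evn V E M m z)"
  have "evn V E M n0 z" unfolding n0_def by (rule LeastI[of _ n], rule ex)
  moreover have "\<forall>m<n0. \<not> evn V E M m z" unfolding n0_def using not_less_Least by blast
  ultimately obtain N where "maximum_matching E N" "z \<notin> \<Union>N" "\<forall>e\<in>N. \<forall>t\<in>e. col t \<noteq> col z \<longrightarrow> t \<in> \<Union>M"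
    using even_D_aux[where col=col, OF g M col] by meson
  thus ?thesis by blast
qed

lemma leaf_exists:
  assumes g: "graph V E" and ac: "acyclic_graph E" and F: "F \<subseteq> E" and S: "finite S" "S \<noteq> {}"
    and FS: "\<forall>e\<in>F. e \<subseteq> S"
  shows "\<exists>v\<in>S. \<forall>a b. {v,a} \<in> F \<and> {v,b} \<in> F \<longrightarrow> a = b"
proof (rule ccontr)
  assume "\<not> ?thesis"
  hence deg2: "\<forall>v\<in>S. \<exists>a b. {v,a} \<in> F \<and> {v,b} \<in> F \<and> a \<noteq> b" by blast
  define P where "P = {p. distinct p \<and> set p \<subseteq> S \<and> p \<noteq> [] \<and> (\<forall>i. Suc i < length p \<longrightarrow> {p!i, p!Suc i} \<in> F)}"
  have "P \<subseteq> {xs. set xs \<subseteq> S \<and> length xs \<le> card S}"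
  proof
    fix q assume "q \<in> P"
    hence q: "distinct q" "set q \<subseteq> S" unfolding P_def by auto
    have "length q = card (set q)" using distinct_card[OF q(1)] by simp
    also have "\<dots> \<le> card S" by (rule card_mono[OF S(1) q(2)])
    finally show "q \<in> {xs. set xs \<subseteq> S \<and> length xs \<le> card S}" using q by simp
  qed
  hence finP: "finite P" by (rule finite_subset[OF _ finite_lists_length_le[OF S(1)]])
  obtain s where s: "s \<in> S" using S(2) by blast
  have "[s] \<in> P" unfolding P_def using s by auto
  hence neP: "length ` P \<noteq> {}" by blast
  have "Max (length ` P) \<in> length ` P" using Max_in[OF finite_imageI[OF finP] neP] .
  then obtain p where pP: "p \<in> P" and plen: "length p = Max (length ` P)" by (metis imageE)
  have maxp: "\<And>q. q \<in> P \<Longrightarrow> length q \<le> length p"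
    using plen finP by simp
  have pd: "distinct p" and pS: "set p \<subseteq> S" and pne: "p \<noteq> []"
    and pF: "\<And>i. Suc i < length p \<Longrightarrow> {p!i, p!Suc i} \<in> F" using pP unfolding P_def by auto
  have v0S: "p!0 \<in> S" using pS pne by (simp add: subset_iff)
  obtain a b where ab: "{p!0,a} \<in> F" "{p!0,b} \<in> F" "a \<noteq> b" using deg2 v0S by blast
  obtain x where x: "{p!0,x} \<in> F" "length p \<ge> 2 \<longrightarrow> x \<noteq> p!1"
    using ab by metis
  have xE: "{p!0,x} \<in> E" using x F by blast
  have x0: "x \<noteq> p!0" using adj_ne[OF g, of "p!0" x] xE adj_def by metis
  have xS: "x \<in> S" using FS x(1) by blast
  show False
  proof (cases "x \<in> set p")
    case False
    have "x # p \<in> P" unfolding P_def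
    proof (intro CollectI conjI allI impI)
      show "distinct (x # p)" using False pd by simp
      show "set (x # p) \<subseteq> S" using xS pS by simp
      show "x # p \<noteq> []" by simp
      fix i assume i: "Suc i < length (x # p)"
      show "{(x # p) ! i, (x # p) ! Suc i} \<in> F"
      proof (cases i)
        case 0 thus ?thesis using x(1) pne by (simp add: insert_commute hd_conv_nth)
      next
        case (Suc j) thus ?thesis using pF i by simp
      qed
    qed
    hence "length (x # p) \<le> length p" by (rule maxp)
    thus False by simp
  next
    case True
    then obtain j where j: "j < length p" "p!j = x" by (meson in_set_conv_nth)
    have j0: "j \<noteq> 0" using j x0 by (metis)
    have j1: "j \<noteq> 1" using j x by auto
    define c where "c = take (Suc j) p"
    have lc: "length c = Suc j" using j unfolding c_def by simp
    have "is_cycle E c" unfolding is_cycle_def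
    proof (intro conjI allI impI)
      show "3 \<le> length c" using lc j0 j1 by simp
      show "distinct c" using pd unfolding c_def by simp
      fix i assume i: "Suc i < length c"
      have "{p!i, p!Suc i} \<in> F" using pF i lc j by simp
      thus "adj E (c ! i) (c ! Suc i)" using F i lc unfolding c_def adj_def by auto
    next
      have "c \<noteq> []" using lc by auto
      hence "last c = c ! j" using lc by (simp add: last_conv_nth)
      hence "last c = p!j" unfolding c_def by simp
      moreover have "hd c = p!0" unfolding c_def using pne by (simp add: hd_conv_nth)
      ultimately show "adj E (last c) (hd c)" using xE j unfolding adj_def by (simp add: insert_commute)
    qed
    thus False using ac unfolding acyclic_graph_def by blast
  qed
qed

lemma forest_bound:
  assumes g: "graph V E" and ac: "acyclic_graph E"
  shows "finite S \<Longrightarrow> S \<noteq> {} \<Longrightarrow> card {e\<in>E. e \<subseteq> S} + 1 \<le> card S"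
proof (induction "card S" arbitrary: S rule: less_induct)
  case less
  have finE: "finite E" using graph_finE[OF g] .
  obtain v where v: "v \<in> S" "\<forall>a b. {v,a} \<in> {e\<in>E. e \<subseteq> S} \<and> {v,b} \<in> {e\<in>E. e \<subseteq> S} \<longrightarrow> a = b"
    using leaf_exists[OF g ac _ less.prems, of "{e\<in>E. e \<subseteq> S}"] by blast
  have split: "{e\<in>E. e \<subseteq> S} \<subseteq> {e\<in>E. e \<subseteq> S - {v}} \<union> {e\<in>E. e \<subseteq> S \<and> v \<in> e}" by blast
  have c1: "card {e\<in>E. e \<subseteq> S \<and> v \<in> e} \<le> 1"
  proof -
    have "\<forall>e1\<in>{e\<in>E. e \<subseteq> S \<and> v \<in> e}. \<forall>e2\<in>{e\<in>E. e \<subseteq> S \<and> v \<in> e}. e1 = e2"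
    proof (intro ballI)
      fix e1 e2 assume e1: "e1 \<in> {e\<in>E. e \<subseteq> S \<and> v \<in> e}" and e2: "e2 \<in> {e\<in>E. e \<subseteq> S \<and> v \<in> e}"
      obtain a where a: "e1 = {v,a}" using edge_other[OF g, of e1 v] e1 by blast
      obtain b where b: "e2 = {v,b}" using edge_other[OF g, of e2 v] e2 by blast
      have "a = b" using v(2) e1 e2 a b by blast
      thus "e1 = e2" using a b by simp
    qed
    thus ?thesis using card_le_Suc0_iff_eq[of "{e\<in>E. e \<subseteq> S \<and> v \<in> e}"] finE by simp
  qed
  show ?case
  proof (cases "S - {v} = {}")
    case True
    hence Sv: "S = {v}" using v(1) by blast
    have "{e\<in>E. e \<subseteq> S} = {}"
    proof (rule ccontr)
      assume "{e\<in>E. e \<subseteq> S} \<noteq> {}"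
      then obtain e where "e \<in> E" "e \<subseteq> S" by blast
      then obtain p q where "e = {p,q}" "p \<noteq> q" "p \<in> S" "q \<in> S" using graph_edge[OF g, of e] by blast
      thus False using Sv by blast
    qed
    thus ?thesis using Sv by simp
  next
    case False
    have lt: "card (S - {v}) < card S" by (rule card_Diff1_less[OF less.prems(1) v(1)])
    have ih: "card {e\<in>E. e \<subseteq> S - {v}} + 1 \<le> card (S - {v})"
      using less.hyps[OF lt _ False] less.prems(1) by blast
    have fU: "finite ({e\<in>E. e \<subseteq> S - {v}} \<union> {e\<in>E. e \<subseteq> S \<and> v \<in> e})"
      using finE by simp
    have "card {e\<in>E. e \<subseteq> S} \<le> card ({e\<in>E. e \<subseteq> S - {v}} \<union> {e\<in>E. e \<subseteq> S \<and> v \<in> e})"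
      by (rule card_mono[OF fU split])
    also have "\<dots> \<le> card {e\<in>E. e \<subseteq> S - {v}} + card {e\<in>E. e \<subseteq> S \<and> v \<in> e}"
      by (rule card_Un_le)
    finally have "card {e\<in>E. e \<subseteq> S} \<le> card {e\<in>E. e \<subseteq> S - {v}} + card {e\<in>E. e \<subseteq> S \<and> v \<in> e}" .
    moreover have "card (S - {v}) = card S - 1" using v(1) less.prems(1) by simp
    ultimately show ?thesis using ih c1 lt by linarith
  qed
qed

lemma coloring_aux:
  assumes g: "graph V E" and ac: "acyclic_graph E"
  shows "finite S \<Longrightarrow> \<exists>col::'a\<Rightarrow>bool. \<forall>u\<in>S. \<forall>w\<in>S. adj E u w \<longrightarrow> col u \<noteq> col w"
proof (induction "card S" arbitrary: S rule: less_induct)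
  case less
  show ?case
  proof (cases "S = {}")
    case True thus ?thesis by blast
  next
    case False
    obtain v where v: "v \<in> S" "\<forall>a b. {v,a} \<in> {e\<in>E. e \<subseteq> S} \<and> {v,b} \<in> {e\<in>E. e \<subseteq> S} \<longrightarrow> a = b"
      using leaf_exists[OF g ac _ less.prems False, of "{e\<in>E. e \<subseteq> S}"] by blast
    have lt: "card (S - {v}) < card S" by (rule card_Diff1_less[OF less.prems(1) v(1)])
    obtain col0 :: "'a \<Rightarrow> bool" where c0: "\<forall>u\<in>S - {v}. \<forall>w\<in>S - {v}. adj E u w \<longrightarrow> col0 u \<noteq> col0 w"
      using less.hyps[OF lt] less.prems(1) by blast
    show ?thesis
    proof (cases "\<exists>a\<in>S. adj E v a")
      case True
      then obtain a where a: "a \<in> S" "adj E v a" by blast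
      have av: "a \<noteq> v" using adj_ne[OF g a(2)] by metis
      have uniq: "\<And>w. w \<in> S \<Longrightarrow> adj E v w \<Longrightarrow> w = a"
      proof -
        fix w assume w: "w \<in> S" "adj E v w"
        have "{v,w} \<in> {e\<in>E. e \<subseteq> S}" using w v(1) unfolding adj_def by auto
        moreover have "{v,a} \<in> {e\<in>E. e \<subseteq> S}" using a v(1) unfolding adj_def by auto
        ultimately show "w = a" using v(2) by blast
      qed
      define col where "col = col0(v := \<not> col0 a)"
      have "\<forall>u\<in>S. \<forall>w\<in>S. adj E u w \<longrightarrow> col u \<noteq> col w"
      proof (intro ballI impI)
        fix u w assume u: "u \<in> S" and w: "w \<in> S" and uw: "adj E u w"
        have uwne: "u \<noteq> w" using adj_ne[OF g uw] by simp
        show "col u \<noteq> col w"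
        proof (cases "u = v")
          case True
          hence "w = a" using uniq w uw by blast
          thus ?thesis using True av unfolding col_def by simp
        next
          case False
          show ?thesis
          proof (cases "w = v")
            case True
            hence "u = a" using uniq u uw adj_sym by metis
            thus ?thesis using True av unfolding col_def by simp
          next
            case False
            thus ?thesis using c0 u w uw \<open>u \<noteq> v\<close> unfolding col_def by simp
          qed
        qed
      qed
      thus ?thesis by blast
    next
      case False
      have "\<forall>u\<in>S. \<forall>w\<in>S. adj E u w \<longrightarrow> col0 u \<noteq> col0 w"
      proof (intro ballI impI)
        fix u w assume u: "u \<in> S" and w: "w \<in> S" and uw: "adj E u w"
        have "u \<noteq> v" using False w uw by blast
        moreover have "w \<noteq> v" using False u uw adj_sym by metis
        ultimately show "col0 u \<noteq> col0 w" using c0 u w uw by simp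
      qed
      thus ?thesis by blast
    qed
  qed
qed

lemma coloring:
  assumes g: "graph V E" and ac: "acyclic_graph E"
  shows "\<exists>col::'a\<Rightarrow>bool. \<forall>u w. adj E u w \<longrightarrow> col u \<noteq> col w"
proof -
  have "finite V" using g unfolding graph_def by blast
  then obtain col :: "'a\<Rightarrow>bool" where c: "\<forall>u\<in>V. \<forall>w\<in>V. adj E u w \<longrightarrow> col u \<noteq> col w"
    using coloring_aux[OF g ac] by blast
  have "\<forall>u w. adj E u w \<longrightarrow> col u \<noteq> col w"
  proof (intro allI impI)
    fix u w assume "adj E u w"
    thus "col u \<noteq> col w" using c adj_ne[OF g] by blast
  qed
  thus ?thesis by blast
qed

lemma conn_edges:
  assumes g: "graph V E" and c: "connected V E"
  shows "card V \<le> card E + 1"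
proof -
  have finV: "finite V" using g unfolding graph_def by blast
  have finE: "finite E" using graph_finE[OF g] .
  obtain r where r: "r \<in> V" using c unfolding connected_def by blast
  have reach: "\<And>v. v \<in> V \<Longrightarrow> \<exists>k. (adj E ^^ k) r v"
    using c r unfolding connected_def by (metis rtranclp_power)
  define dist where "dist v = (LEAST k. (adj E ^^ k) r v)" for v
  have dist_ok: "\<And>v. v \<in> V \<Longrightarrow> (adj E ^^ dist v) r v"
    unfolding dist_def using reach by (metis LeastI)
  have dist_le: "\<And>v k. (adj E ^^ k) r v \<Longrightarrow> dist v \<le> k"
    unfolding dist_def by (rule Least_le)
  define par where "par v = (SOME u. (adj E ^^ (dist v - 1)) r u \<and> adj E u v)" for v
  have par_ok: "\<And>v. v \<in> V - {r} \<Longrightarrow> adj E (par v) v \<and> dist (par v) < dist v"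
  proof -
    fix v assume v: "v \<in> V - {r}"
    have dv: "dist v \<noteq> 0"
    proof
      assume "dist v = 0"
      hence "(adj E ^^ 0) r v" using dist_ok v by force
      thus False using v by simp
    qed
    then obtain k where k: "dist v = Suc k" by (cases "dist v") auto
    have "(adj E ^^ Suc k) r v" using dist_ok v k by force
    then obtain u where "(adj E ^^ k) r u" "adj E u v" by (meson relpowp_Suc_E)
    hence ex: "\<exists>u. (adj E ^^ (dist v - 1)) r u \<and> adj E u v" using k by auto
    have "(adj E ^^ (dist v - 1)) r (par v) \<and> adj E (par v) v"
      unfolding par_def by (rule someI_ex[OF ex])
    moreover hence "dist (par v) \<le> dist v - 1" using dist_le by blast
    ultimately show "adj E (par v) v \<and> dist (par v) < dist v" using dv by linarith
  qed
  define f where "f v = {par v, v}" for v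
  have inj: "inj_on f (V - {r})"
  proof (rule inj_onI)
    fix v w assume v: "v \<in> V - {r}" and w: "w \<in> V - {r}" and fe: "f v = f w"
    show "v = w"
    proof (rule ccontr)
      assume ne: "v \<noteq> w"
      have "(par v = par w \<and> v = w) \<or> (par v = w \<and> v = par w)" using fe unfolding f_def by (simp add: doubleton_eq_iff)
      hence "par v = w \<and> v = par w" using ne by blast
      thus False using par_ok[OF v] par_ok[OF w] by auto
    qed
  qed
  have "f ` (V - {r}) \<subseteq> E"
  proof
    fix e assume "e \<in> f ` (V - {r})"
    then obtain v where v: "v \<in> V - {r}" "e = f v" by blast
    have "adj E (par v) v" using par_ok[OF v(1)] by blast
    thus "e \<in> E" using v(2) unfolding f_def adj_def by simp
  qed
  hence "card (V - {r}) \<le> card E" by (rule card_inj_on_le[OF inj _ finE])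
  moreover have "card (V - {r}) = card V - 1" using r finV by simp
  moreover have "card V \<ge> 1" using r finV by (metis One_nat_def Suc_leI card_gt_0_iff empty_iff)
  ultimately show ?thesis by linarith
qed

lemma card_filter_sum: "finite X \<Longrightarrow> card {x\<in>X. P x} = (\<Sum>x\<in>X. if P x then 1 else 0)"
proof -
  assume f: "finite X"
  have "sum (\<lambda>_. 1::nat) {x\<in>X. P x} = (\<Sum>x\<in>X. if P x then 1 else 0)"
    by (rule sum.inter_filter[OF f])
  thus ?thesis by (simp only: card_eq_sum)
qed

lemma card_matching_union:
  assumes g: "graph V E" and m: "matching E M"
  shows "card (\<Union>M) = 2 * card M"
proof -
  have pw: "pairwise disjnt M" using matching_disj[OF m] unfolding pairwise_def disjnt_def by blast
  have c2: "\<And>e. e \<in> M \<Longrightarrow> card e = 2"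
  proof -
    fix e assume "e \<in> M"
    hence "e \<in> E" using matching_sub[OF m] by blast
    then obtain u v where "e = {u,v}" "u \<noteq> v" using graph_edge[OF g] by blast
    thus "card e = 2" by simp
  qed
  have "card (\<Union>M) = sum card M"
    by (rule card_Union_disjoint[OF pw]) (metis c2 card.infinite zero_neq_numeral)
  also have "\<dots> = sum (\<lambda>_. 2) M" using c2 by simp
  also have "\<dots> = 2 * card M" by simp
  finally show ?thesis .
qed

theorem lemma1:
  fixes V :: "'a set" and E :: "'a set set"
  assumes "class_T V E"
  shows "GE_C V E = {} \<and> independent V E (GE_A V E) \<and>
         (\<forall>v\<in>GE_A V E. degree E v = 3) \<and> matching_number E = card (GE_A V E) \<and>
         bipartite_with V E (GE_A V E) (GE_D V E)"
proof -
  have T: "tree V E" and degA: "\<forall>v\<in>GE_A V E. degree E v \<le> 3" and nu: "3 * matching_number E + 1 = card V"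
    using assms unfolding class_T_def by auto
  have g: "graph V E" and c: "connected V E" and ac: "acyclic_graph E" using T unfolding tree_def by auto
  have finV: "finite V" using g unfolding graph_def by blast
  have finE: "finite E" using graph_finE[OF g] .
  obtain col :: "'a \<Rightarrow> bool" where colr: "\<forall>u w. adj E u w \<longrightarrow> col u \<noteq> col w" using coloring[OF g ac] by blast
  have col: "\<And>u w. adj E u w \<Longrightarrow> col u \<noteq> col w" using colr by blast
  define D where "D = GE_D V E"
  define A where "A = GE_A V E"
  define C where "C = GE_C V E"
  have Dsub: "D \<subseteq> V" unfolding D_def GE_D_def by blast
  have Asub: "A \<subseteq> V" unfolding A_def GE_A_def neighbourhood_def by blast
  have AD: "A \<inter> D = {}" unfolding A_def D_def GE_A_def by blast
  have Cdef: "C = V - (A \<union> D)" unfolding C_def A_def D_def GE_C_def by simp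
  have notD: "\<And>v N. v \<in> V \<Longrightarrow> v \<notin> D \<Longrightarrow> maximum_matching E N \<Longrightarrow> v \<in> \<Union>N"
    unfolding D_def GE_D_def by blast
  have inD: "\<And>v N. v \<in> V \<Longrightarrow> maximum_matching E N \<Longrightarrow> v \<notin> \<Union>N \<Longrightarrow> v \<in> D"
    unfolding D_def GE_D_def by blast
  have toA: "\<And>d x. d \<in> D \<Longrightarrow> adj E x d \<Longrightarrow> x \<notin> D \<Longrightarrow> x \<in> A"
  proof -
    fix d x assume d: "d \<in> D" and xd: "adj E x d" and x: "x \<notin> D"
    have "x \<in> V" using adj_ne[OF g xd] by blast
    thus "x \<in> A" using d xd x unfolding A_def GE_A_def neighbourhood_def D_def by blast
  qed
  have Dind: "\<And>u v. u \<in> D \<Longrightarrow> v \<in> D \<Longrightarrow> adj E u v \<Longrightarrow> False"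
  proof -
    fix u v assume u: "u \<in> D" and v: "v \<in> D" and uv: "adj E u v"
    obtain N where N: "maximum_matching E N" "u \<notin> \<Union>N" using u unfolding D_def GE_D_def by blast
    obtain N' where N': "maximum_matching E N'" "v \<notin> \<Union>N'" using v unfolding D_def GE_D_def by blast
    have vV: "v \<in> V" using v Dsub by blast
    have "even_reach V E N v" by (rule D_even[OF g N(1) N'(1) vV N'(2)])
    from even_D[where col=col, OF g N(1) col this]
    obtain Nv where Nv: "maximum_matching E Nv" "v \<notin> \<Union>Nv" "\<forall>e\<in>Nv. \<forall>t\<in>e. col t \<noteq> col v \<longrightarrow> t \<in> \<Union>N"
      by blast
    have cuv: "col u \<noteq> col v" using col[OF uv] .
    have "u \<notin> \<Union>Nv" using Nv(3) cuv N(2) by blast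
    thus False using no_aug[OF g Nv(1) uv[unfolded adj_def] _ Nv(2)] by blast
  qed
  obtain M where M: "maximum_matching E M" using ex_max[OF g] by blast
  have mM: "matching E M" using M maximum_matching_def by blast
  have G2: "\<And>a w. a \<in> A \<Longrightarrow> {a,w} \<in> M \<Longrightarrow> w \<in> D"
  proof -
    fix a w assume a: "a \<in> A" and aw: "{a,w} \<in> M"
    obtain d where d: "d \<in> D" "adj E a d" using a unfolding A_def GE_A_def neighbourhood_def D_def by blast
    have awE: "{a,w} \<in> E" using aw matching_sub[OF mM] by blast
    have wV: "w \<in> V" using adj_ne[OF g, of a w] awE adj_def by metis
    obtain N where N: "maximum_matching E N" "d \<notin> \<Union>N" using d(1) unfolding D_def GE_D_def by blast
    have dV: "d \<in> V" using d Dsub by blast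
    have "even_reach V E M d" by (rule D_even[OF g M N(1) dV N(2)])
    then obtain r where r: "r \<in> V" "r \<notin> \<Union>M" "(st E M)\<^sup>*\<^sup>* r d" unfolding even_reach_def by blast
    have "{d,a} \<in> E" using d(2) unfolding adj_def by (simp add: insert_commute)
    hence "st E M d w" unfolding st_def using aw by blast
    hence "(st E M)\<^sup>*\<^sup>* r w" using r(3) by (meson rtranclp.rtrancl_into_rtrancl)
    hence "even_reach V E M w" using r unfolding even_reach_def by blast
    from even_D[where col=col, OF g M col this]
    obtain Nw where "maximum_matching E Nw" "w \<notin> \<Union>Nw" by blast
    thus "w \<in> D" using inD wV by blast
  qed
  have Acov: "\<And>a. a \<in> A \<Longrightarrow> \<exists>w. {a,w} \<in> M"
  proof -
    fix a assume a: "a \<in> A"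
    have "a \<in> \<Union>M" using notD[OF _ _ M] a Asub AD by blast
    then obtain e where e: "e \<in> M" "a \<in> e" by blast
    thus "\<exists>w. {a,w} \<in> M" using edge_other[OF g, of e a] matching_sub[OF mM] by blast
  qed
  define p where "p a = (SOME w. {a,w} \<in> M)" for a
  have pM: "\<And>a. a \<in> A \<Longrightarrow> {a, p a} \<in> M" unfolding p_def using Acov by (metis someI_ex)
  have injp: "inj_on p A"
  proof (rule inj_onI)
    fix a b assume a: "a \<in> A" and b: "b \<in> A" and ab: "p a = p b"
    have "{a, p a} = {b, p a}"
    proof (rule ccontr)
      assume "{a, p a} \<noteq> {b, p a}"
      hence "{a, p a} \<inter> {b, p a} = {}" using matching_disj[OF mM pM[OF a]] pM[OF b] ab by metis
      thus False by blast
    qed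
    thus "a = b" by (metis doubleton_eq_iff)
  qed
  define W where "W = \<Union>M \<inter> D"
  have pW: "p ` A \<subseteq> W" unfolding W_def using pM G2 by blast
  have finW: "finite W" unfolding W_def using Dsub finV finite_subset by blast
  have AW: "card A \<le> card W" using card_inj_on_le[OF injp pW finW] .
  have ACsub: "A \<union> C \<union> W \<subseteq> \<Union>M" using notD[OF _ _ M] Asub AD unfolding Cdef W_def by blast
  have finA: "finite A" using Asub finV finite_subset by blast
  have finC: "finite C" unfolding Cdef using finV by simp
  have finUM: "finite (\<Union>M)"
  proof -
    have "\<Union>M \<subseteq> V" using matching_sub[OF mM] graph_edge[OF g] by blast
    thus ?thesis using finV finite_subset by blast
  qed
  have "card (A \<union> C \<union> W) = card A + card C + card W"
  proof -
    have d1: "A \<inter> C = {}" unfolding Cdef by blast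
    have d2: "(A \<union> C) \<inter> W = {}" unfolding Cdef W_def using AD by blast
    have "card (A \<union> C \<union> W) = card (A \<union> C) + card W" using card_Un_disjoint[OF _ finW d2] finA finC by simp
    moreover have "card (A \<union> C) = card A + card C" using card_Un_disjoint[OF finA finC d1] .
    ultimately show ?thesis by simp
  qed
  moreover have "card (A \<union> C \<union> W) \<le> card (\<Union>M)" by (rule card_mono[OF finUM ACsub])
  moreover have "card (\<Union>M) = 2 * matching_number E"
    using card_matching_union[OF g mM] M unfolding maximum_matching_def by simp
  ultimately have nuA: "2 * card A + card C \<le> 2 * matching_number E" using AW by linarith
  have Vsplit: "card V = card A + card C + card D"
  proof -
    have "V = A \<union> C \<union> D" unfolding Cdef using Asub Dsub by blast
    moreover have "(A \<union> C) \<inter> D = {}" unfolding Cdef using AD by blast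
    moreover have "finite D" using Dsub finV finite_subset by blast
    moreover have "card (A \<union> C) = card A + card C" using card_Un_disjoint[OF finA finC] unfolding Cdef by blast
    ultimately show ?thesis using card_Un_disjoint[of "A \<union> C" D] finA finC by simp
  qed
  have SA: "(\<Sum>a\<in>A. degree E a) \<le> 3 * card A"
    using sum_bounded_above[of A "degree E" 3] degA unfolding A_def by simp
  have dc: "(\<Sum>a\<in>A. degree E a) = (\<Sum>e\<in>E. card (A \<inter> e))"
  proof -
    have "(\<Sum>a\<in>A. degree E a) = (\<Sum>a\<in>A. \<Sum>e\<in>E. if a \<in> e then 1 else 0)"
      unfolding degree_def using card_filter_sum[OF finE] by simp
    also have "\<dots> = (\<Sum>e\<in>E. \<Sum>a\<in>A. if a \<in> e then 1 else 0)" by (rule sum.swap)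
    also have "\<dots> = (\<Sum>e\<in>E. card {a\<in>A. a \<in> e})" using card_filter_sum[OF finA] by simp
    also have "\<dots> = (\<Sum>e\<in>E. card (A \<inter> e))" by (simp add: Int_def)
    finally show ?thesis .
  qed
  have noA_C: "\<And>e. e \<in> E \<Longrightarrow> A \<inter> e = {} \<Longrightarrow> e \<subseteq> C"
  proof -
    fix e assume e: "e \<in> E" and ea: "A \<inter> e = {}"
    obtain x y where xy: "e = {x,y}" "x \<noteq> y" "x \<in> V" "y \<in> V" using graph_edge[OF g e] by blast
    have adjxy: "adj E x y" using e xy unfolding adj_def by simp
    have xA: "x \<notin> A" and yA: "y \<notin> A" using ea xy by auto
    have "x \<notin> D"
    proof
      assume xD: "x \<in> D"
      show False
      proof (cases "y \<in> D")
        case True show False by (rule Dind[OF xD True adjxy])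
      next
        case False thus False using toA[OF xD _ False] adjxy adj_sym yA by metis
      qed
    qed
    moreover have "y \<notin> D"
    proof
      assume yD: "y \<in> D"
      show False
      proof (cases "x \<in> D")
        case True show False by (rule Dind[OF True yD adjxy])
      next
        case False thus False using toA[OF yD adjxy False] xA by blast
      qed
    qed
    ultimately show "e \<subseteq> C" unfolding Cdef using xy xA yA by blast
  qed
  have pe: "\<And>e. e \<in> E \<Longrightarrow> 1 + (if e \<subseteq> A then 1 else 0) \<le> card (A \<inter> e) + (if e \<subseteq> C then 1 else (0::nat))"
  proof -
    fix e assume e: "e \<in> E"
    obtain x y where xy: "e = {x,y}" "x \<noteq> y" "x \<in> V" "y \<in> V" using graph_edge[OF g e] by blast
    show "1 + (if e \<subseteq> A then 1 else 0) \<le> card (A \<inter> e) + (if e \<subseteq> C then 1 else (0::nat))"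
    proof (cases "e \<subseteq> A")
      case True
      hence "A \<inter> e = e" by blast
      hence "card (A \<inter> e) = 2" using xy by simp
      thus ?thesis using True by simp
    next
      case False
      show ?thesis
      proof (cases "A \<inter> e = {}")
        case True thus ?thesis using noA_C[OF e True] False by simp
      next
        case ne: False
        have "finite (A \<inter> e)" using xy by simp
        hence "card (A \<inter> e) \<ge> 1" using ne by (simp add: Suc_leI card_gt_0_iff)
        thus ?thesis using False by simp
      qed
    qed
  qed
  have sumE: "card E + card {e\<in>E. e \<subseteq> A} \<le> (\<Sum>e\<in>E. card (A \<inter> e)) + card {e\<in>E. e \<subseteq> C}"
  proof -
    have s1: "(\<Sum>e\<in>E. (1::nat) + (if e \<subseteq> A then 1 else 0)) = (\<Sum>e\<in>E. 1) + (\<Sum>e\<in>E. if e \<subseteq> A then 1 else 0)"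
      by (rule sum.distrib)
    have s2: "(\<Sum>e\<in>E. card (A \<inter> e) + (if e \<subseteq> C then 1 else (0::nat))) = (\<Sum>e\<in>E. card (A \<inter> e)) + (\<Sum>e\<in>E. if e \<subseteq> C then 1 else 0)"
      by (rule sum.distrib)
    have s3: "(\<Sum>e\<in>E. (1::nat) + (if e \<subseteq> A then 1 else 0)) \<le> (\<Sum>e\<in>E. card (A \<inter> e) + (if e \<subseteq> C then 1 else (0::nat)))"
      by (rule sum_mono) (rule pe)
    have s4: "(\<Sum>e\<in>E. (1::nat)) = card E" by simp
    have s5: "card {e\<in>E. e \<subseteq> A} = (\<Sum>e\<in>E. if e \<subseteq> A then 1 else 0)" by (rule card_filter_sum[OF finE])
    have s6: "card {e\<in>E. e \<subseteq> C} = (\<Sum>e\<in>E. if e \<subseteq> C then 1 else 0)" by (rule card_filter_sum[OF finE])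
    show ?thesis using s1 s2 s3 s4 s5 s6 by linarith
  qed
  have VE: "card V \<le> card E + 1" by (rule conn_edges[OF g c])
  have Cempty: "C = {}"
  proof (rule ccontr)
    assume Cne: "C \<noteq> {}"
    have "card {e\<in>E. e \<subseteq> C} + 1 \<le> card C" by (rule forest_bound[OF g ac finC Cne])
    thus False using nuA Vsplit nu SA dc sumE VE by linarith
  qed
  have ECC: "card {e\<in>E. e \<subseteq> C} = 0"
  proof -
    have "{e\<in>E. e \<subseteq> C} = {}" using Cempty graph_edge[OF g] by blast
    thus ?thesis by (metis card.empty)
  qed
  have cC: "card C = 0" using Cempty by simp
  have EAA: "card {e\<in>E. e \<subseteq> A} = 0" and nuEq: "matching_number E = card A"
    and Seq: "(\<Sum>a\<in>A. degree E a) = 3 * card A"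
    using nuA Vsplit nu SA dc sumE VE ECC cC by linarith+
  have EAA': "{e\<in>E. e \<subseteq> A} = {}" using EAA finE by simp
  have indep: "independent V E A"
    unfolding independent_def
  proof (intro conjI ballI)
    show "A \<subseteq> V" by (rule Asub)
    fix u v assume u: "u \<in> A" and v: "v \<in> A"
    show "\<not> adj E u v"
    proof
      assume "adj E u v"
      hence "{u,v} \<in> {e\<in>E. e \<subseteq> A}" using u v unfolding adj_def by simp
      thus False using EAA' by blast
    qed
  qed
  have deg3: "\<forall>v\<in>A. degree E v = 3"
  proof (rule ccontr)
    assume "\<not> (\<forall>v\<in>A. degree E v = 3)"
    then obtain v where v: "v \<in> A" "degree E v \<noteq> 3" by blast
    hence "degree E v < 3" using degA unfolding A_def by force
    hence "(\<Sum>a\<in>A. degree E a) < (\<Sum>a\<in>A. 3)"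
      using sum_strict_mono_ex1[OF finA, of "degree E" "\<lambda>_. 3"] degA v(1) unfolding A_def by blast
    thus False using Seq by simp
  qed
  have VAD: "A \<union> D = V" using Cempty unfolding Cdef using Asub Dsub by blast
  have bip: "bipartite_with V E A D"
    unfolding bipartite_with_def
  proof (intro conjI ballI)
    show "A \<union> D = V" by (rule VAD)
    show "A \<inter> D = {}" by (rule AD)
    fix e assume e: "e \<in> E"
    obtain x y where xy: "e = {x,y}" "x \<noteq> y" "x \<in> V" "y \<in> V" using graph_edge[OF g e] by blast
    have nA: "\<not> e \<subseteq> A" using EAA' e by blast
    have mA: "A \<inter> e \<noteq> {}" using noA_C[OF e] Cempty xy by blast
    show "\<exists>x\<in>A. \<exists>y\<in>D. e = {x, y}"
    proof (cases "x \<in> A")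
      case True
      hence "y \<notin> A" using nA xy by blast
      hence "y \<in> D" using VAD xy by blast
      thus ?thesis using True xy by blast
    next
      case False
      hence "y \<in> A" using mA xy by blast
      moreover have "x \<in> D" using VAD xy False by blast
      ultimately show ?thesis using xy by (metis insert_commute)
    qed
  qed
  show ?thesis
    using Cempty indep deg3 nuEq bip unfolding A_def C_def D_def by blast
qed

end
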